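(* Let $E$ be a row-finite graph and let $H_1\subseteq H_2$ be hereditary saturated subsets of $E^0$. Then there is a $\mathbb Z$-monoid isomorphism $M^{\mathrm{gr}}_{H_2/H_1}\cong M^{\mathrm{gr}}_{E_{H_2}}/M^{\mathrm{gr}}_{E_{H_1}}$ (sending $v(i)$, $v\in H_2\setminus H_1$, to the class of $v(i)$). In particular, for a hereditary saturated subset $H$ of $E^0$ and the $\mathbb Z$-order ideal $I$ of $M^{\mathrm{gr}}_E$ generated by $\{v(i):v\in H,i\in\mathbb Z\}$, there is a $\mathbb Z$-monoid isomorphism $M^{\mathrm{gr}}_{E/H}\cong M^{\mathrm{gr}}_E/I$.
   Context: A graph $E=(E^0,E^1,r,s)$ is row-finite if each vertex emits finitely many edges; a sink is a vertex emitting no edges. $H\subseteq E^0$ is hereditary if $s(e)\in H$ implies $r(e)\in H$; it is saturated if every non-sink $v$ with $r(s^{-1}(v))\subseteq H$ lies in $H$. For a row-finite graph $G$, $M^{\mathrm{gr}}_G$ is the commutative monoid generated by symbols $v(i)$ ($v\in G^0$, $i\in\mathbb Z$) subject to $v(i)=\sum_{e\in s^{-1}(v)}r(e)(i-1)$ for every non-sink $v$ and every $i$; $\mathbb Z$ acts by ${}^n v(i)=v(i-n)$. The restriction graph $E_H$ has vertices $H$, edges $\{e:s(e)\in H\}$. For $H_1\subseteq H_2$ hereditary saturated, the graph $H_2/H_1$ has vertices $H_2\setminus H_1$ and edges $\{e\in E^1: s(e)\in H_2,\ r(e)\notin H_1\}$ with restricted $r,s$; $E/H:=E^0/H$ (vertices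 $E^0\setminus H$, edges with $r(e)\notin H$). The natural map $M^{\mathrm{gr}}_{E_{H_1}}\to M^{\mathrm{gr}}_{E_{H_2}}$ ($v(i)\mapsto v(i)$) is used to regard $M^{\mathrm{gr}}_{E_{H_1}}$ as a submonoid of $M^{\mathrm{gr}}_{E_{H_2}}$. For a submonoid $N$ of a commutative monoid $M$, $M/N$ is $M$ modulo the congruence $a\sim b$ iff $a+i=b+j$ for some $i,j\in N$. *)

theory Defs
  imports Main "HOL-Library.Multiset"
begin

record ('v, 'e) graph =
  verts :: "'v set"
  edges :: "'e set"
  src   :: "'e \<Rightarrow> 'v"
  rng   :: "'e \<Rightarrow> 'v"

definition wf_graph :: "('v, 'e) graph \<Rightarrow> bool" where
  "wf_graph G \<longleftrightarrow> (\<forall>e\<in>edges G. src G e \<in> verts G \<and> rng G e \<in> verts G)"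

definition emits :: "('v, 'e) graph \<Rightarrow> 'v \<Rightarrow> 'e set" where
  "emits G v = {e \<in> edges G. src G e = v}"

definition row_finite :: "('v, 'e) graph \<Rightarrow> bool" where
  "row_finite G \<longleftrightarrow> (\<forall>v\<in>verts G. finite (emits G v))"

definition sink :: "('v, 'e) graph \<Rightarrow> 'v \<Rightarrow> bool" where
  "sink G v \<longleftrightarrow> v \<in> verts G \<and> emits G v = {}"

definition hereditary :: "('v, 'e) graph \<Rightarrow> 'v set \<Rightarrow> bool" where
  "hereditary G H \<longleftrightarrow> H \<subseteq> verts G \<and> (\<forall>e\<in>edges G. src G e \<in> H \<longrightarrow> rng G e \<in> H)"

definition saturated :: "('v, 'e) graph \<Rightarrow> 'v set \<Rightarrow> bool" where
  "saturated G H \<longleftrightarrow>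
     (\<forall>v\<in>verts G. \<not> sink G v \<and> rng G ` emits G v \<subseteq> H \<longrightarrow> v \<in> H)"

definition restr_graph :: "('v, 'e) graph \<Rightarrow> 'v set \<Rightarrow> ('v, 'e) graph" where
  "restr_graph G H = \<lparr>verts = H, edges = {e \<in> edges G. src G e \<in> H},
                        src = src G, rng = rng G\<rparr>"

definition quot_graph :: "('v, 'e) graph \<Rightarrow> 'v set \<Rightarrow> 'v set \<Rightarrow> ('v, 'e) graph" where
  "quot_graph G H1 H2 = \<lparr>verts = H2 - H1,
                           edges = {e \<in> edges G. src G e \<in> H2 \<and> rng G e \<notin> H1},
                           src = src G, rng = rng G\<rparr>"

definition graph_mod :: "('v, 'e) graph \<Rightarrow> 'v set \<Rightarrow> ('v, 'e) graph" where
  "graph_mod G H = quot_graph G H (verts G)"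

record 'a zmon =
  zcar  :: "'a set"
  zadd  :: "'a \<Rightarrow> 'a \<Rightarrow> 'a"
  zzero :: "'a"
  zact  :: "int \<Rightarrow> 'a \<Rightarrow> 'a"

definition zmon_iso :: "'a zmon \<Rightarrow> 'b zmon \<Rightarrow> ('a \<Rightarrow> 'b) \<Rightarrow> bool" where
  "zmon_iso M N f \<longleftrightarrow>
     bij_betw f (zcar M) (zcar N) \<and>
     (\<forall>x\<in>zcar M. \<forall>y\<in>zcar M. f (zadd M x y) = zadd N (f x) (f y)) \<and>
     f (zzero M) = zzero N \<and>
     (\<forall>n. \<forall>x\<in>zcar M. f (zact M n x) = zact N n (f x))"

definition zquot_rel :: "'a zmon \<Rightarrow> 'a set \<Rightarrow> ('a \<times> 'a) set" where
  "zquot_rel M N = {(a, b). a \<in> zcar M \<and> b \<in> zcar M \<and>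
                       (\<exists>i\<in>N. \<exists>j\<in>N. zadd M a i = zadd M b j)}"

definition zmon_quot :: "'a zmon \<Rightarrow> 'a set \<Rightarrow> 'a set zmon" where
  "zmon_quot M N =
     \<lparr>zcar = zcar M // zquot_rel M N,
      zadd = (\<lambda>A B. zquot_rel M N `` {zadd M a b | a b. a \<in> A \<and> b \<in> B}),
      zzero = zquot_rel M N `` {zzero M},
      zact = (\<lambda>n A. zquot_rel M N `` (zact M n ` A))\<rparr>"

definition zorder_ideal :: "'a zmon \<Rightarrow> 'a set \<Rightarrow> bool" where
  "zorder_ideal M I \<longleftrightarrow>
     I \<subseteq> zcar M \<and> zzero M \<in> I \<and>
     (\<forall>x\<in>I. \<forall>y\<in>I. zadd M x y \<in> I) \<and>
     (\<forall>x\<in>zcar M. \<forall>y\<in>I. (\<exists>c\<in>zcar M. zadd M x c = y) \<longrightarrow> x \<in> I) \<and>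
     (\<forall>n. \<forall>x\<in>I. zact M n x \<in> I)"

definition zorder_ideal_gen :: "'a zmon \<Rightarrow> 'a set \<Rightarrow> 'a set" where
  "zorder_ideal_gen M S = \<Inter>{I. zorder_ideal M I \<and> S \<subseteq> I}"

text \<open>Elements of the free commutative monoid on the symbols \<open>v(i)\<close> are
  multisets over \<open>G^0 \<times> \<int>\<close>; the pair \<open>(v,i)\<close> stands for \<open>v(i)\<close>.\<close>
definition msets_over :: "'a set \<Rightarrow> 'a multiset set" where
  "msets_over A = {m. set_mset m \<subseteq> A}"

inductive_set gr_cong :: "('v, 'e) graph \<Rightarrow> (('v \<times> int) multiset \<times> ('v \<times> int) multiset) set"
  for G :: "('v, 'e) graph" where
  gr_refl:  "a \<in> msets_over (verts G \<times> UNIV) \<Longrightarrow> (a, a) \<in> gr_cong G"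
| gr_base:  "v \<in> verts G \<Longrightarrow> \<not> sink G v \<Longrightarrow>
             ({#(v, i)#}, \<Sum>e\<in>emits G v. {#(rng G e, i - 1)#}) \<in> gr_cong G"
| gr_sym:   "(a, b) \<in> gr_cong G \<Longrightarrow> (b, a) \<in> gr_cong G"
| gr_trans: "(a, b) \<in> gr_cong G \<Longrightarrow> (b, c) \<in> gr_cong G \<Longrightarrow> (a, c) \<in> gr_cong G"
| gr_add:   "(a, b) \<in> gr_cong G \<Longrightarrow> (c, d) \<in> gr_cong G \<Longrightarrow> (a + c, b + d) \<in> gr_cong G"

definition shift :: "int \<Rightarrow> ('v \<times> int) multiset \<Rightarrow> ('v \<times> int) multiset" where
  "shift n m = image_mset (\<lambda>(v, i). (v, i - n)) m"

definition Mgr :: "('v, 'e) graph \<Rightarrow> ('v \<times> int) multiset set zmon" where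
  "Mgr G =
     \<lparr>zcar = msets_over (verts G \<times> UNIV) // gr_cong G,
      zadd = (\<lambda>X Y. gr_cong G `` {x + y | x y. x \<in> X \<and> y \<in> Y}),
      zzero = gr_cong G `` {{#}},
      zact = (\<lambda>n X. gr_cong G `` (shift n ` X))\<rparr>"

definition gen :: "('v, 'e) graph \<Rightarrow> 'v \<Rightarrow> int \<Rightarrow> ('v \<times> int) multiset set" where
  "gen G v i = gr_cong G `` {{#(v, i)#}}"

definition nat_map :: "('v, 'e) graph \<Rightarrow> 'v set \<Rightarrow>
                        ('v \<times> int) multiset set \<Rightarrow> ('v \<times> int) multiset set" where
  "nat_map G H2 X = gr_cong (restr_graph G H2) `` X"

end

theory Submission imports Defs begin

definition cls :: "('v, 'e) graph \<Rightarrow> ('v \<times> int) multiset \<Rightarrow> ('v \<times> int) multiset set" where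
  "cls G a = gr_cong G `` {a}"

lemma sum_single_set:
  "set_mset (\<Sum>e\<in>A. {#f e#}) \<subseteq> f ` A"
  by (cases "finite A") (auto simp: set_mset_sum)

lemma gc_field:
  assumes "wf_graph G" "(a, b) \<in> gr_cong G"
  shows "a \<in> msets_over (verts G \<times> UNIV) \<and> b \<in> msets_over (verts G \<times> UNIV)"
  using assms(2)
proof induction
  case (gr_base v i)
  have "set_mset (\<Sum>e\<in>emits G v. {#(rng G e, i - 1)#}) \<subseteq> (\<lambda>e. (rng G e, i - 1)) ` emits G v"
    by (rule sum_single_set)
  also have "\<dots> \<subseteq> verts G \<times> UNIV" using assms(1) by (auto simp: wf_graph_def emits_def)
  finally show ?case using gr_base by (auto simp: msets_over_def)
qed (auto simp: msets_over_def)

lemma gc_equiv: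
  assumes "wf_graph G"
  shows "equiv (msets_over (verts G \<times> UNIV)) (gr_cong G)"
proof (rule equivI)
  show "gr_cong G \<subseteq> msets_over (verts G \<times> UNIV) \<times> msets_over (verts G \<times> UNIV)"
    using gc_field[OF assms] by auto
  show "refl_on (msets_over (verts G \<times> UNIV)) (gr_cong G)" by (rule refl_onI) (rule gr_refl)
  show "sym (gr_cong G)" by (rule symI) (rule gr_sym)
  show "trans (gr_cong G)" by (rule transI) (rule gr_trans)
qed

lemma Image_class_lemma:
  assumes "equiv A r" "x \<in> S" "S \<subseteq> r `` {x}"
  shows "r `` S = r `` {x}"
  using assms unfolding equiv_def sym_def trans_def by blast

lemma cls_eq_iff:
  assumes "wf_graph G" "a \<in> msets_over (verts G \<times> UNIV)" "b \<in> msets_over (verts G \<times> UNIV)"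
  shows "cls G a = cls G b \<longleftrightarrow> (a, b) \<in> gr_cong G"
  unfolding cls_def using eq_equiv_class_iff[OF gc_equiv[OF assms(1)] assms(2,3)] by simp

lemma cls_self: "a \<in> msets_over (verts G \<times> UNIV) \<Longrightarrow> a \<in> cls G a"
  by (auto simp: cls_def intro: gr_refl)

lemma cls_mem: "x \<in> cls G a \<longleftrightarrow> (a, x) \<in> gr_cong G"
  by (simp add: cls_def)

lemma msets_over_add[simp]: "a + b \<in> msets_over A \<longleftrightarrow> a \<in> msets_over A \<and> b \<in> msets_over A"
  by (auto simp: msets_over_def)

lemma msets_over_empty[simp]: "{#} \<in> msets_over A"
  by (auto simp: msets_over_def)

lemma zcar_Mgr: "zcar (Mgr G) = cls G ` msets_over (verts G \<times> UNIV)"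
  by (auto simp: Mgr_def quotient_def cls_def)

lemma zzero_Mgr: "zzero (Mgr G) = cls G {#}"
  by (simp add: Mgr_def cls_def Image_class_lemma)

lemma cls_add:
  assumes "wf_graph G" "a \<in> msets_over (verts G \<times> UNIV)" "b \<in> msets_over (verts G \<times> UNIV)"
  shows "zadd (Mgr G) (cls G a) (cls G b) = cls G (a + b)"
proof -
  have S: "{x + y |x y. x \<in> cls G a \<and> y \<in> cls G b} \<subseteq> cls G (a + b)"
    by (auto simp: cls_def intro: gr_add)
  have "a + b \<in> {x + y |x y. x \<in> cls G a \<and> y \<in> cls G b}"
    using cls_self assms by blast
  then show ?thesis using S gc_equiv[OF assms(1)]
    by (simp add: Mgr_def cls_def Image_class_lemma)
qed

lemma shift_add[simp]: "shift n (a + b) = shift n a + shift n b"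
  by (simp add: shift_def)

lemma shift_empty[simp]: "shift n {#} = {#}"
  by (simp add: shift_def)

lemma shift_sum: "shift n (sum g A) = (\<Sum>e\<in>A. shift n (g e))"
  by (induction A rule: infinite_finite_induct) auto

lemma shift_single[simp]: "shift n {#(v, i)#} = {#(v, i - n)#}"
  by (simp add: shift_def)

lemma shift_msets[simp]: "shift n a \<in> msets_over (A \<times> UNIV) \<longleftrightarrow> a \<in> msets_over (A \<times> UNIV)"
  by (auto simp: shift_def msets_over_def)

lemma gc_shift:
  assumes "(a, b) \<in> gr_cong G"
  shows "(shift n a, shift n b) \<in> gr_cong G"
  using assms
proof induction
  case (gr_base v i)
  have "shift n (\<Sum>e\<in>emits G v. {#(rng G e, i - 1)#}) = (\<Sum>e\<in>emits G v. {#(rng G e, (i - n) - 1)#})"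
    by (simp add: shift_sum algebra_simps)
  moreover have "shift n {#(v, i)#} = {#(v, i - n)#}" by (simp add: shift_def)
  ultimately show ?case using gr_cong.gr_base[OF gr_base] by simp
next
  case (gr_refl a) then show ?case by (auto intro: gr_cong.gr_refl)
next
  case (gr_sym a b) then show ?case by (auto intro: gr_cong.gr_sym)
next
  case (gr_trans a b c) then show ?case by (meson gr_cong.gr_trans)
next
  case (gr_add a b c d) then show ?case using gr_cong.gr_add by fastforce
qed

lemma cls_act:
  assumes "wf_graph G" "a \<in> msets_over (verts G \<times> UNIV)"
  shows "zact (Mgr G) n (cls G a) = cls G (shift n a)"
proof -
  have S: "shift n ` cls G a \<subseteq> cls G (shift n a)"
    by (auto simp: cls_def intro: gc_shift)
  have "shift n a \<in> shift n ` cls G a" using cls_self assms by blast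
  then show ?thesis using S gc_equiv[OF assms(1)]
    by (simp add: Mgr_def cls_def Image_class_lemma)
qed

lemma gen_cls: "gen G v i = cls G {#(v, i)#}"
  by (simp add: gen_def cls_def)

definition Qg :: "('v, 'e) graph \<Rightarrow> 'v set \<Rightarrow> ('v, 'e) graph" where
  "Qg G K = \<lparr>verts = verts G - K, edges = {e \<in> edges G. rng G e \<notin> K}, src = src G, rng = rng G\<rparr>"

definition phi :: "'v set \<Rightarrow> ('v \<times> int) multiset \<Rightarrow> ('v \<times> int) multiset" where
  "phi K a = filter_mset (\<lambda>p. fst p \<notin> K) a"

lemma Qg_simps[simp]: "verts (Qg G K) = verts G - K" "rng (Qg G K) = rng G" "src (Qg G K) = src G"
  by (simp_all add: Qg_def)

lemma emits_Qg: "emits (Qg G K) v = {e \<in> emits G v. rng G e \<notin> K}"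
  by (auto simp: Qg_def emits_def)

lemma wf_Qg: "wf_graph G \<Longrightarrow> \<forall>e\<in>edges G. src G e \<in> K \<longrightarrow> rng G e \<in> K \<Longrightarrow> wf_graph (Qg G K)"
  by (auto simp: Qg_def wf_graph_def)

lemma filter_sum: "filter_mset P (sum g A) = (\<Sum>e\<in>A. filter_mset P (g e))"
  by (induction A rule: infinite_finite_induct) auto

lemma phi_add[simp]: "phi K (a + b) = phi K a + phi K b"
  by (simp add: phi_def)

lemma phi_empty[simp]: "phi K {#} = {#}"
  by (simp add: phi_def)

lemma phi_msets: "a \<in> msets_over (V \<times> UNIV) \<Longrightarrow> phi K a \<in> msets_over ((V - K) \<times> UNIV)"
  by (auto simp: phi_def msets_over_def)

lemma phi_id: "a \<in> msets_over ((V - K) \<times> UNIV) \<Longrightarrow> phi K a = a"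
proof -
  assume a: "a \<in> msets_over ((V - K) \<times> UNIV)"
  have "filter_mset (\<lambda>p. fst p \<notin> K) a = filter_mset (\<lambda>p. True) a"
    by (rule filter_mset_cong) (use a in \<open>auto simp: msets_over_def\<close>)
  then show ?thesis by (simp add: phi_def)
qed

lemma phi_shift: "phi K (shift n a) = shift n (phi K a)"
  by (simp add: phi_def shift_def filter_mset_image_mset case_prod_beta comp_def)

lemma conical:
  assumes "\<forall>v\<in>verts H. finite (emits H v)" "(a, b) \<in> gr_cong H"
  shows "a = {#} \<longleftrightarrow> b = {#}"
  using assms(2)
proof induction
  case (gr_base v i)
  then have "finite (emits H v)" "emits H v \<noteq> {}" using assms(1) by (auto simp: sink_def)
  then obtain x where x: "x \<in> emits H v" by blast
  have "(\<Sum>e\<in>emits H v. {#(rng H e, i - 1)#}) = {#(rng H x, i - 1)#} + (\<Sum>e\<in>emits H v - {x}. {#(rng H e, i - 1)#})"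
    by (rule sum.remove[OF \<open>finite (emits H v)\<close> x])
  then show ?case by simp
qed auto

locale qbase =
  fixes G :: "('v, 'e) graph" and K :: "'v set"
  assumes wf: "wf_graph G" and rf: "row_finite G"
    and Ksub: "K \<subseteq> verts G"
    and her: "\<forall>e\<in>edges G. src G e \<in> K \<longrightarrow> rng G e \<in> K"
    and sat: "\<forall>v\<in>verts G - K. \<not> sink G v \<longrightarrow> (\<exists>e\<in>emits G v. rng G e \<notin> K)"
begin

abbreviation "VG \<equiv> msets_over (verts G \<times> UNIV)"
abbreviation "Q \<equiv> Qg G K"
abbreviation "VQ \<equiv> msets_over ((verts G - K) \<times> UNIV)"

lemma emits_fin: "v \<in> verts G \<Longrightarrow> finite (emits G v)"
  using rf by (simp add: row_finite_def)

lemma emits_edges: "e \<in> emits G v \<Longrightarrow> e \<in> edges G \<and> src G e = v"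
  by (simp add: emits_def)

lemma sum_filter_single:
  "finite A \<Longrightarrow> filter_mset P (\<Sum>e\<in>A. {#f e#}) = (\<Sum>e\<in>{e\<in>A. P (f e)}. {#f e#})"
proof -
  assume fin: "finite A"
  have "filter_mset P (\<Sum>e\<in>A. {#f e#}) = (\<Sum>e\<in>A. filter_mset P {#f e#})" by (rule filter_sum)
  also have "\<dots> = (\<Sum>e\<in>A. if P (f e) then {#f e#} else {#})"
    by (rule sum.cong) (simp_all only: filter_single_mset)
  also have "\<dots> = (\<Sum>e\<in>{e\<in>A. P (f e)}. {#f e#})"
    using sum.inter_filter[OF fin, of "\<lambda>e. {#f e#}" "\<lambda>e. P (f e)"] by simp
  finally show ?thesis .
qed

lemma gc_phi: "(a, b) \<in> gr_cong G \<Longrightarrow> (phi K a, phi K b) \<in> gr_cong Q"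
proof (induction rule: gr_cong.induct)
  case (gr_refl a)
  then show ?case using phi_msets[OF gr_refl] by (auto intro: gr_cong.gr_refl)
next
  case (gr_base v i)
  have fin: "finite (emits G v)" using emits_fin gr_base by blast
  let ?s = "\<Sum>e\<in>emits G v. {#(rng G e, i - 1)#}"
  have ps: "phi K ?s = (\<Sum>e\<in>{e \<in> emits G v. rng G e \<notin> K}. {#(rng G e, i - 1)#})"
    unfolding phi_def by (subst sum_filter_single[OF fin]) simp
  show ?case
  proof (cases "v \<in> K")
    case True
    then have E: "{e \<in> emits G v. rng G e \<notin> K} = {}" using her by (auto simp: emits_def)
    have "phi K ?s = {#}" using ps unfolding E by simp
    moreover have "phi K {#(v, i)#} = {#}" using True by (simp add: phi_def)
    ultimately show ?thesis by (simp add: gr_cong.gr_refl)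
  next
    case False
    then have "v \<in> verts Q" "\<not> sink Q v" using sat gr_base
      by (auto simp: sink_def emits_Qg)
    from gr_cong.gr_base[OF this, of i] show ?thesis using ps False
      by (simp add: phi_def emits_Qg)
  qed
next
  case (gr_sym a b) then show ?case by (blast intro: gr_cong.gr_sym)
next
  case (gr_trans a b c) then show ?case by (blast intro: gr_cong.gr_trans)
next
  case (gr_add a b c d) then show ?case using gr_cong.gr_add by fastforce
qed

end

locale qsetup = qbase G K for G :: "('v, 'e) graph" and K :: "'v set" +
  fixes N :: "('v \<times> int) multiset set set"
  assumes Nsub: "N \<subseteq> zcar (Mgr G)"
    and N0: "cls G {#} \<in> N"
    and Nadd: "\<forall>X\<in>N. \<forall>Y\<in>N. zadd (Mgr G) X Y \<in> N"
    and Nact: "\<forall>n. \<forall>X\<in>N. zact (Mgr G) n X \<in> N"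
    and NK: "\<forall>m\<in>msets_over (K \<times> UNIV). cls G m \<in> N"
    and Nker: "\<forall>X\<in>N. \<forall>c\<in>X. (phi K c, {#}) \<in> gr_cong (Qg G K)"
begin

abbreviation "R \<equiv> zquot_rel (Mgr G) N"

definition Rm :: "('v \<times> int) multiset \<Rightarrow> ('v \<times> int) multiset \<Rightarrow> bool" where
  "Rm a b \<longleftrightarrow> (\<exists>c\<in>VG. \<exists>d\<in>VG. cls G c \<in> N \<and> cls G d \<in> N \<and> (a + c, b + d) \<in> gr_cong G)"

lemma VQ_VG: "a \<in> VQ \<Longrightarrow> a \<in> VG"
  by (auto simp: msets_over_def)

lemma N_cls: "X \<in> N \<Longrightarrow> \<exists>c\<in>VG. X = cls G c"
  using Nsub by (auto simp: zcar_Mgr)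

lemma R_iff:
  assumes "a \<in> VG" "b \<in> VG"
  shows "(cls G a, cls G b) \<in> R \<longleftrightarrow> Rm a b"
proof
  assume "(cls G a, cls G b) \<in> R"
  then obtain i j where ij: "i \<in> N" "j \<in> N" "zadd (Mgr G) (cls G a) i = zadd (Mgr G) (cls G b) j"
    by (auto simp: zquot_rel_def)
  obtain c d where cd: "c \<in> VG" "d \<in> VG" "i = cls G c" "j = cls G d" using N_cls ij by metis
  have "cls G (a + c) = cls G (b + d)" using ij cd assms by (simp add: cls_add[OF wf])
  then have "(a + c, b + d) \<in> gr_cong G" using cls_eq_iff[OF wf] assms cd by simp
  then show "Rm a b" unfolding Rm_def using cd ij by blast
next
  assume "Rm a b"
  then obtain c d where cd: "c \<in> VG" "d \<in> VG" "cls G c \<in> N" "cls G d \<in> N" "(a + c, b + d) \<in> gr_cong G"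
    unfolding Rm_def by blast
  have "zadd (Mgr G) (cls G a) (cls G c) = zadd (Mgr G) (cls G b) (cls G d)"
    using cd assms by (simp add: cls_add[OF wf] cls_eq_iff[OF wf])
  then show "(cls G a, cls G b) \<in> R" using cd assms
    by (auto simp: zquot_rel_def zcar_Mgr)
qed

lemma Rm_refl: "a \<in> VG \<Longrightarrow> Rm a a"
  unfolding Rm_def using N0 by (auto intro!: bexI[of _ "{#}"] gr_refl)

lemma Rm_sym: "Rm a b \<Longrightarrow> Rm b a"
  unfolding Rm_def by (blast intro: gr_sym)

lemma Rm_add: "Rm a b \<Longrightarrow> Rm c d \<Longrightarrow> Rm (a + c) (b + d)"
proof -
  assume "Rm a b" "Rm c d"
  then obtain x y x' y' where h: "x \<in> VG" "y \<in> VG" "cls G x \<in> N" "cls G y \<in> N" "(a + x, b + y) \<in> gr_cong G"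
    "x' \<in> VG" "y' \<in> VG" "cls G x' \<in> N" "cls G y' \<in> N" "(c + x', d + y') \<in> gr_cong G"
    unfolding Rm_def by blast
  have "cls G (x + x') \<in> N" "cls G (y + y') \<in> N"
    using Nadd h by (metis cls_add[OF wf])+
  moreover have "((a + c) + (x + x'), (b + d) + (y + y')) \<in> gr_cong G"
    using gr_add[OF h(5) h(10)] by (simp add: ac_simps)
  moreover have "x + x' \<in> VG" "y + y' \<in> VG" using h by auto
  ultimately show ?thesis unfolding Rm_def by blast
qed

lemma Rm_trans: "Rm a b \<Longrightarrow> Rm b e \<Longrightarrow> Rm a e"
proof -
  assume "Rm a b" "Rm b e"
  then obtain x y x' y' where h: "x \<in> VG" "y \<in> VG" "cls G x \<in> N" "cls G y \<in> N" "(a + x, b + y) \<in> gr_cong G"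
    "x' \<in> VG" "y' \<in> VG" "cls G x' \<in> N" "cls G y' \<in> N" "(b + x', e + y') \<in> gr_cong G"
    unfolding Rm_def by blast
  have "cls G (x + x') \<in> N" "cls G (y' + y) \<in> N"
    using Nadd h by (metis cls_add[OF wf])+
  moreover have "(a + (x + x'), b + y + x') \<in> gr_cong G"
    using gr_add[OF h(5) gr_refl[OF h(6)]] by (simp add: ac_simps)
  moreover have "(b + y + x', e + (y' + y)) \<in> gr_cong G"
    using gr_add[OF h(10) gr_refl[OF h(2)]] by (simp add: ac_simps)
  moreover have "x + x' \<in> VG" "y' + y \<in> VG" using h by auto
  ultimately show ?thesis unfolding Rm_def by (blast intro: gr_trans)
qed

lemma Rm_shift: "Rm a b \<Longrightarrow> Rm (shift n a) (shift n b)"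
proof -
  assume "Rm a b"
  then obtain x y where h: "x \<in> VG" "y \<in> VG" "cls G x \<in> N" "cls G y \<in> N" "(a + x, b + y) \<in> gr_cong G"
    unfolding Rm_def by blast
  have "cls G (shift n x) \<in> N" "cls G (shift n y) \<in> N"
    using Nact h by (metis cls_act[OF wf])+
  moreover have "(shift n a + shift n x, shift n b + shift n y) \<in> gr_cong G"
    using gc_shift[OF h(5)] by simp
  moreover have "shift n x \<in> VG" "shift n y \<in> VG" using h by auto
  ultimately show ?thesis unfolding Rm_def by blast
qed

lemma Rm_VG: "Rm a b \<Longrightarrow> a \<in> VG \<and> b \<in> VG"
  unfolding Rm_def using gc_field[OF wf] by fastforce

lemma R_equiv: "equiv (zcar (Mgr G)) R"
proof (rule equivI)
  show "R \<subseteq> zcar (Mgr G) \<times> zcar (Mgr G)" by (auto simp: zquot_rel_def)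
  show "refl_on (zcar (Mgr G)) R"
    by (rule refl_onI) (auto simp: zcar_Mgr R_iff Rm_refl)
  show "sym R"
  proof (rule symI)
    fix X Y assume "(X, Y) \<in> R"
    then show "(Y, X) \<in> R" by (auto simp: zquot_rel_def)
  qed
  show "trans R"
  proof (rule transI)
    fix X Y Z assume "(X, Y) \<in> R" "(Y, Z) \<in> R"
    moreover then obtain a b c where "a \<in> VG" "b \<in> VG" "c \<in> VG" "X = cls G a" "Y = cls G b" "Z = cls G c"
      by (auto simp: zquot_rel_def zcar_Mgr)
    ultimately show "(X, Z) \<in> R" using R_iff Rm_trans by auto
  qed
qed

lemma R_cases:
  assumes "(X, Y) \<in> R"
  obtains a b where "a \<in> VG" "b \<in> VG" "X = cls G a" "Y = cls G b" "Rm a b"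
proof -
  obtain a b where "a \<in> VG" "b \<in> VG" "X = cls G a" "Y = cls G b"
    using assms by (auto simp: zquot_rel_def zcar_Mgr)
  moreover then have "Rm a b" using R_iff assms by simp
  ultimately show ?thesis using that by blast
qed

lemma R_add: "(X, Y) \<in> R \<Longrightarrow> (Z, W) \<in> R \<Longrightarrow> (zadd (Mgr G) X Z, zadd (Mgr G) Y W) \<in> R"
  by (elim R_cases) (simp add: cls_add[OF wf] R_iff Rm_add)

lemma R_act: "(X, Y) \<in> R \<Longrightarrow> (zact (Mgr G) n X, zact (Mgr G) n Y) \<in> R"
  by (elim R_cases) (simp add: cls_act[OF wf] R_iff Rm_shift)

lemma lemA: "(a, b) \<in> gr_cong Q \<Longrightarrow> Rm a b"
proof (induction rule: gr_cong.induct)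
  case (gr_refl a)
  then show ?case using Rm_refl VQ_VG by (simp add: Qg_def) blast
next
  case (gr_base v i)
  then have vG: "v \<in> verts G" "v \<notin> K" by auto
  have fin: "finite (emits G v)" using emits_fin vG by blast
  let ?sQ = "\<Sum>e\<in>emits Q v. {#(rng G e, i - 1)#}"
  let ?sK = "\<Sum>e\<in>{e \<in> emits G v. rng G e \<in> K}. {#(rng G e, i - 1)#}"
  have un: "emits G v = emits Q v \<union> {e \<in> emits G v. rng G e \<in> K}" by (auto simp: emits_Qg)
  have seq: "(\<Sum>e\<in>emits G v. {#(rng G e, i - 1)#}) = ?sQ + ?sK"
    by (subst un, rule sum.union_disjoint) (use fin in \<open>auto simp: emits_Qg\<close>)
  have "\<not> sink G v" using gr_base by (auto simp: sink_def emits_Qg)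
  from gr_cong.gr_base[OF vG(1) this, of i]
  have g: "({#(v, i)#} + {#}, ?sQ + ?sK) \<in> gr_cong G"
    unfolding seq by simp
  have sKK: "?sK \<in> msets_over (K \<times> UNIV)"
    using sum_single_set[of "\<lambda>e. (rng G e, i - 1)" "{e \<in> emits G v. rng G e \<in> K}"]
    by (auto simp: msets_over_def)
  then have "?sK \<in> VG" using Ksub by (auto simp: msets_over_def)
  moreover have "cls G ?sK \<in> N" using NK sKK by blast
  ultimately show ?case unfolding Rm_def
    apply -
    apply (rule bexI[of _ "{#}"])
     apply (rule bexI[of _ ?sK])
    using g N0 by simp_all
next
  case (gr_sym a b) then show ?case by (blast intro: Rm_sym)
next
  case (gr_trans a b c) then show ?case by (blast intro: Rm_trans)
next
  case (gr_add a b c d) then show ?case by (blast intro: Rm_add)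
qed

definition fmap :: "('v \<times> int) multiset set \<Rightarrow> ('v \<times> int) multiset set set" where
  "fmap X = R `` (cls G ` X)"

lemma VQ_eq: "msets_over (verts Q \<times> UNIV) = VQ" by simp

lemma f_cls: "a \<in> VQ \<Longrightarrow> fmap (cls Q a) = R `` {cls G a}"
  unfolding fmap_def
proof (rule Image_class_lemma[OF R_equiv])
  assume a: "a \<in> VQ"
  then show "cls G a \<in> cls G ` cls Q a" using cls_self[of a Q] by simp
  show "cls G ` cls Q a \<subseteq> R `` {cls G a}"
  proof
    fix X assume "X \<in> cls G ` cls Q a"
    then obtain b where b: "(a, b) \<in> gr_cong Q" "X = cls G b" by (auto simp: cls_mem)
    then have "Rm a b" using lemA by blast
    then show "X \<in> R `` {cls G a}" using b Rm_VG R_iff by auto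
  qed
qed

lemma R_refl_cls: "a \<in> VQ \<Longrightarrow> (cls G a, cls G a) \<in> R"
  using VQ_VG R_iff Rm_refl by blast

lemma zcarQ: "zcar (Mgr Q) = cls Q ` VQ"
  by (simp add: zcar_Mgr)

lemma zcar_quot: "zcar (zmon_quot (Mgr G) N) = (\<lambda>a. R `` {cls G a}) ` VG"
  by (auto simp: zmon_quot_def quotient_def zcar_Mgr)

lemma wfQ: "wf_graph Q" using wf_Qg[OF wf her] .

lemma Rm_phi: "a \<in> VG \<Longrightarrow> Rm a (phi K a)"
proof -
  assume a: "a \<in> VG"
  let ?d = "filter_mset (\<lambda>p. fst p \<in> K) a"
  have "a = phi K a + ?d" unfolding phi_def using multiset_partition[of a "\<lambda>p. fst p \<notin> K"] by simp
  then have "(a + {#}, phi K a + ?d) \<in> gr_cong G" using gr_refl[OF a] by simp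
  moreover have dK: "?d \<in> msets_over (K \<times> UNIV)" by (auto simp: msets_over_def)
  moreover have "?d \<in> VG" using a by (auto simp: msets_over_def)
  moreover have "cls G ?d \<in> N" using NK dK by blast
  ultimately show ?thesis unfolding Rm_def
    apply -
    apply (rule bexI[of _ "{#}"])
     apply (rule bexI[of _ ?d])
    using N0 by simp_all
qed

lemma iso: "zmon_iso (Mgr Q) (zmon_quot (Mgr G) N) fmap"
  unfolding zmon_iso_def
proof (intro conjI ballI allI)
  show "bij_betw fmap (zcar (Mgr Q)) (zcar (zmon_quot (Mgr G) N))"
    unfolding bij_betw_def
  proof
    show "inj_on fmap (zcar (Mgr Q))"
    proof (rule inj_onI)
      fix X Y assume "X \<in> zcar (Mgr Q)" "Y \<in> zcar (Mgr Q)" "fmap X = fmap Y"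
      then obtain a b where ab: "a \<in> VQ" "b \<in> VQ" "X = cls Q a" "Y = cls Q b"
        "R `` {cls G a} = R `` {cls G b}" by (auto simp: zcarQ f_cls)
      then have "(cls G a, cls G b) \<in> R"
      proof -
        have "cls G a \<in> zcar (Mgr G)" "cls G b \<in> zcar (Mgr G)" using ab VQ_VG by (auto simp: zcar_Mgr)
        then show ?thesis using eq_equiv_class_iff[OF R_equiv] ab(5) by blast
      qed
      then have "Rm a b" using R_iff VQ_VG ab by auto
      then obtain c d where cd: "c \<in> VG" "d \<in> VG" "cls G c \<in> N" "cls G d \<in> N" "(a + c, b + d) \<in> gr_cong G"
        unfolding Rm_def by blast
      have pc: "(phi K c, {#}) \<in> gr_cong Q" using Nker cd cls_self by blast
      have pd: "(phi K d, {#}) \<in> gr_cong Q" using Nker cd cls_self by blast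
      have "(a + phi K c, b + phi K d) \<in> gr_cong Q"
        using gc_phi[OF cd(5)] phi_id[OF ab(1)] phi_id[OF ab(2)] by simp
      moreover have "(a + {#}, a + phi K c) \<in> gr_cong Q"
        using gr_add[OF gr_refl[of a Q] gr_sym[OF pc]] ab by simp
      moreover have "(b + phi K d, b + {#}) \<in> gr_cong Q"
        using gr_add[OF gr_refl[of b Q] pd] ab by simp
      ultimately have "(a, b) \<in> gr_cong Q" by (auto intro: gr_trans)
      then show "X = Y" using ab cls_eq_iff[OF wfQ] by simp
    qed
    show "fmap ` zcar (Mgr Q) = zcar (zmon_quot (Mgr G) N)"
    proof
      show "fmap ` zcar (Mgr Q) \<subseteq> zcar (zmon_quot (Mgr G) N)"
        using VQ_VG by (auto simp: zcarQ f_cls zcar_quot intro!: imageI)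
      show "zcar (zmon_quot (Mgr G) N) \<subseteq> fmap ` zcar (Mgr Q)"
      proof
        fix Z assume "Z \<in> zcar (zmon_quot (Mgr G) N)"
        then obtain a where a: "a \<in> VG" "Z = R `` {cls G a}" by (auto simp: zcar_quot)
        have pa: "phi K a \<in> VQ" using phi_msets[OF a(1)] .
        have "(cls G a, cls G (phi K a)) \<in> R" using R_iff Rm_phi a VQ_VG pa by auto
        then have "Z = R `` {cls G (phi K a)}"
          using a equiv_class_eq[OF R_equiv] by simp
        then have "Z = fmap (cls Q (phi K a))" using f_cls pa by simp
        then show "Z \<in> fmap ` zcar (Mgr Q)" using pa zcarQ by auto
      qed
    qed
  qed
next
  fix X Y assume "X \<in> zcar (Mgr Q)" "Y \<in> zcar (Mgr Q)"
  then obtain a b where ab: "a \<in> VQ" "b \<in> VQ" "X = cls Q a" "Y = cls Q b" by (auto simp: zcarQ)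
  have l: "zadd (Mgr Q) X Y = cls Q (a + b)" using cls_add[OF wfQ] ab by simp
  have "zadd (zmon_quot (Mgr G) N) (fmap X) (fmap Y) = R `` {cls G (a + b)}"
    unfolding zmon_quot_def
  proof (simp, rule Image_class_lemma[OF R_equiv])
    have "cls G (a + b) = zadd (Mgr G) (cls G a) (cls G b)" using cls_add[OF wf VQ_VG[OF ab(1)] VQ_VG[OF ab(2)]] by simp
    moreover have "cls G a \<in> fmap X" "cls G b \<in> fmap Y"
      using ab f_cls R_refl_cls by auto
    ultimately show "cls G (a + b) \<in> {zadd (Mgr G) x y |x y. x \<in> fmap X \<and> y \<in> fmap Y}" by blast
    show "{zadd (Mgr G) x y |x y. x \<in> fmap X \<and> y \<in> fmap Y} \<subseteq> R `` {cls G (a + b)}"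
    proof
      fix z assume "z \<in> {zadd (Mgr G) x y |x y. x \<in> fmap X \<and> y \<in> fmap Y}"
      then obtain x y where xy: "z = zadd (Mgr G) x y" "x \<in> fmap X" "y \<in> fmap Y" by blast
      then have "(cls G a, x) \<in> R" "(cls G b, y) \<in> R" using ab f_cls by auto
      from R_add[OF this] show "z \<in> R `` {cls G (a + b)}"
        using cls_add[OF wf VQ_VG[OF ab(1)] VQ_VG[OF ab(2)]] xy by simp
    qed
  qed
  then show "fmap (zadd (Mgr Q) X Y) = zadd (zmon_quot (Mgr G) N) (fmap X) (fmap Y)"
    using l f_cls ab by simp
next
  show "fmap (zzero (Mgr Q)) = zzero (zmon_quot (Mgr G) N)"
    using f_cls[of "{#}"] by (simp add: zzero_Mgr zmon_quot_def Mgr_def cls_def)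
next
  fix n X assume "X \<in> zcar (Mgr Q)"
  then obtain a where a: "a \<in> VQ" "X = cls Q a" by (auto simp: zcarQ)
  have l: "zact (Mgr Q) n X = cls Q (shift n a)" using cls_act[OF wfQ] a by simp
  have "zact (zmon_quot (Mgr G) N) n (fmap X) = R `` {cls G (shift n a)}"
    unfolding zmon_quot_def
  proof (simp, rule Image_class_lemma[OF R_equiv])
    have "cls G (shift n a) = zact (Mgr G) n (cls G a)" using cls_act[OF wf VQ_VG[OF a(1)]] by simp
    moreover have "cls G a \<in> fmap X"
      using a f_cls R_refl_cls by auto
    ultimately show "cls G (shift n a) \<in> zact (Mgr G) n ` fmap X" by blast
    show "zact (Mgr G) n ` fmap X \<subseteq> R `` {cls G (shift n a)}"
    proof (rule image_subsetI)
      fix x assume "x \<in> fmap X"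
      then have "(cls G a, x) \<in> R" using a f_cls by auto
      from R_act[OF this, of n] show "zact (Mgr G) n x \<in> R `` {cls G (shift n a)}"
        using cls_act[OF wf VQ_VG[OF a(1)]] by simp
    qed
  qed
  then show "fmap (zact (Mgr Q) n X) = zact (zmon_quot (Mgr G) N) n (fmap X)"
    using l f_cls a by simp
qed

lemma main:
  "\<exists>f. zmon_iso (Mgr Q) (zmon_quot (Mgr G) N) f \<and>
     (\<forall>v\<in>verts G - K. \<forall>i. f (gen Q v i) = R `` {gen G v i})"
proof (intro exI conjI ballI allI)
  show "zmon_iso (Mgr Q) (zmon_quot (Mgr G) N) fmap" by (rule iso)
  fix v and i :: int assume "v \<in> verts G - K"
  then have "{#(v, i)#} \<in> VQ" by (simp add: msets_over_def)
  then show "fmap (gen Q v i) = R `` {gen G v i}" by (simp add: gen_cls f_cls)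
qed

end

context qbase
begin

lemma KV: "m \<in> msets_over (K \<times> UNIV) \<Longrightarrow> m \<in> VG"
  using Ksub by (auto simp: msets_over_def)

lemma phiK: "m \<in> msets_over (K \<times> UNIV) \<Longrightarrow> phi K m = {#}"
  by (auto simp: phi_def msets_over_def)

lemma ker_cls: "m \<in> msets_over (K \<times> UNIV) \<Longrightarrow> x \<in> cls G m \<Longrightarrow> (phi K x, {#}) \<in> gr_cong Q"
  using gc_phi[of m x] phiK[of m] by (auto simp: cls_mem intro: gr_sym)

lemma qsetup_sub: "qsetup G K (cls G ` msets_over (K \<times> UNIV))"
proof (rule qsetup.intro[OF qbase_axioms], rule qsetup_axioms.intro)
  show "cls G ` msets_over (K \<times> UNIV) \<subseteq> zcar (Mgr G)" using KV by (auto simp: zcar_Mgr)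
  show "cls G {#} \<in> cls G ` msets_over (K \<times> UNIV)" by simp
  show "\<forall>X\<in>cls G ` msets_over (K \<times> UNIV). \<forall>Y\<in>cls G ` msets_over (K \<times> UNIV).
          zadd (Mgr G) X Y \<in> cls G ` msets_over (K \<times> UNIV)"
  proof (intro ballI)
    fix X Y assume "X \<in> cls G ` msets_over (K \<times> UNIV)" "Y \<in> cls G ` msets_over (K \<times> UNIV)"
    then obtain a b where "a \<in> msets_over (K \<times> UNIV)" "b \<in> msets_over (K \<times> UNIV)" "X = cls G a" "Y = cls G b"
      by blast
    then show "zadd (Mgr G) X Y \<in> cls G ` msets_over (K \<times> UNIV)"
      using cls_add[OF wf KV KV] by auto
  qed
  show "\<forall>n. \<forall>X\<in>cls G ` msets_over (K \<times> UNIV). zact (Mgr G) n X \<in> cls G ` msets_over (K \<times> UNIV)"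
  proof (intro ballI allI)
    fix n X assume "X \<in> cls G ` msets_over (K \<times> UNIV)"
    then obtain a where "a \<in> msets_over (K \<times> UNIV)" "X = cls G a" by blast
    then show "zact (Mgr G) n X \<in> cls G ` msets_over (K \<times> UNIV)"
      using cls_act[OF wf KV] by auto
  qed
  show "\<forall>m\<in>msets_over (K \<times> UNIV). cls G m \<in> cls G ` msets_over (K \<times> UNIV)" by simp
  show "\<forall>X\<in>cls G ` msets_over (K \<times> UNIV). \<forall>c\<in>X. (phi K c, {#}) \<in> gr_cong (Qg G K)"
    using ker_cls by blast
qed

definition "kerQ = {X \<in> zcar (Mgr G). \<forall>c\<in>X. (phi K c, {#}) \<in> gr_cong Q}"

lemma finQ: "\<forall>v\<in>verts Q. finite (emits Q v)"
  using emits_fin by (auto simp: emits_Qg)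

lemma kerQ_cls: "a \<in> VG \<Longrightarrow> cls G a \<in> kerQ \<longleftrightarrow> (phi K a, {#}) \<in> gr_cong Q"
proof
  assume "a \<in> VG" "cls G a \<in> kerQ"
  then show "(phi K a, {#}) \<in> gr_cong Q" using cls_self[of a G] by (auto simp: kerQ_def)
next
  assume a: "a \<in> VG" "(phi K a, {#}) \<in> gr_cong Q"
  have "(phi K c, {#}) \<in> gr_cong Q" if "c \<in> cls G a" for c
  proof -
    have "(phi K a, phi K c) \<in> gr_cong Q" using gc_phi that by (auto simp: cls_mem)
    then show ?thesis using a(2) by (blast intro: gr_sym gr_trans)
  qed
  then show "cls G a \<in> kerQ" using a by (auto simp: kerQ_def zcar_Mgr)
qed

lemma kerQ_ideal: "zorder_ideal (Mgr G) kerQ"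
  unfolding zorder_ideal_def
proof (intro conjI ballI allI impI)
  show "kerQ \<subseteq> zcar (Mgr G)" by (auto simp: kerQ_def)
  show "zzero (Mgr G) \<in> kerQ" using kerQ_cls[of "{#}"] by (simp add: zzero_Mgr gr_refl)
next
  fix X Y assume "X \<in> kerQ" "Y \<in> kerQ"
  then obtain a b where ab: "a \<in> VG" "b \<in> VG" "X = cls G a" "Y = cls G b"
    "(phi K a, {#}) \<in> gr_cong Q" "(phi K b, {#}) \<in> gr_cong Q"
    using kerQ_cls by (auto simp: kerQ_def zcar_Mgr)
  have "(phi K (a + b), {#} + {#}) \<in> gr_cong Q" using gr_add[OF ab(5,6)] by simp
  then show "zadd (Mgr G) X Y \<in> kerQ" using ab cls_add[OF wf ab(1,2)] kerQ_cls[of "a + b"] by simp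
next
  fix X Y assume X: "X \<in> zcar (Mgr G)" and Y: "Y \<in> kerQ" and "\<exists>c\<in>zcar (Mgr G). zadd (Mgr G) X c = Y"
  then obtain a d where ad: "a \<in> VG" "d \<in> VG" "X = cls G a" "Y = cls G (a + d)"
    using cls_add[OF wf] by (auto simp: zcar_Mgr)
  then have "(phi K a + phi K d, {#}) \<in> gr_cong Q" using Y kerQ_cls[of "a + d"] by simp
  then have "phi K a + phi K d = {#}" using conical[OF finQ] by blast
  then have "phi K a = {#}" by simp
  then show "X \<in> kerQ" using ad kerQ_cls[of a] gr_refl[of "{#}" Q] by simp
next
  fix n X assume "X \<in> kerQ"
  then obtain a where a: "a \<in> VG" "X = cls G a" "(phi K a, {#}) \<in> gr_cong Q"
    using kerQ_cls by (auto simp: kerQ_def zcar_Mgr)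
  have "(phi K (shift n a), {#}) \<in> gr_cong Q" using gc_shift[OF a(3), of n] by (simp add: phi_shift)
  then show "zact (Mgr G) n X \<in> kerQ" using a cls_act[OF wf a(1)] kerQ_cls[of "shift n a"] by simp
qed

abbreviation "SK \<equiv> {gen G v i | v i. v \<in> K}"
abbreviation "IK \<equiv> zorder_ideal_gen (Mgr G) SK"

lemma SK_ker: "SK \<subseteq> kerQ"
proof
  fix X assume "X \<in> SK"
  then obtain v i where v: "v \<in> K" "X = cls G {#(v, i)#}" by (auto simp: gen_cls)
  then have m: "{#(v, i)#} \<in> msets_over (K \<times> UNIV)" by (simp add: msets_over_def)
  have "({#}, {#}) \<in> gr_cong Q" by (rule gr_refl) simp
  then show "X \<in> kerQ" using v kerQ_cls[OF KV[OF m]] phiK[OF m] by simp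
qed

lemma IK_ker: "IK \<subseteq> kerQ"
  using kerQ_ideal SK_ker unfolding zorder_ideal_gen_def by blast

lemma IK_mem: "X \<in> IK \<longleftrightarrow> (\<forall>J. zorder_ideal (Mgr G) J \<and> SK \<subseteq> J \<longrightarrow> X \<in> J)"
  unfolding zorder_ideal_gen_def by blast

lemma zi_zero: "zorder_ideal M J \<Longrightarrow> zzero M \<in> J"
  unfolding zorder_ideal_def by blast
lemma zi_add: "zorder_ideal M J \<Longrightarrow> X \<in> J \<Longrightarrow> Y \<in> J \<Longrightarrow> zadd M X Y \<in> J"
  unfolding zorder_ideal_def by blast
lemma zi_act: "zorder_ideal M J \<Longrightarrow> X \<in> J \<Longrightarrow> zact M n X \<in> J"
  unfolding zorder_ideal_def by blast

lemma IK_memI: "(\<And>J. zorder_ideal (Mgr G) J \<Longrightarrow> SK \<subseteq> J \<Longrightarrow> X \<in> J) \<Longrightarrow> X \<in> IK"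
  using IK_mem by blast

lemma IK_memD: "X \<in> IK \<Longrightarrow> zorder_ideal (Mgr G) J \<Longrightarrow> SK \<subseteq> J \<Longrightarrow> X \<in> J"
  using IK_mem by blast

lemma IK_sub: "IK \<subseteq> zcar (Mgr G)"
  using IK_ker by (simp add: kerQ_def subset_iff)

lemma IK_0: "cls G {#} \<in> IK"
  by (rule IK_memI) (simp add: zi_zero zzero_Mgr[symmetric])

lemma IK_add: "X \<in> IK \<Longrightarrow> Y \<in> IK \<Longrightarrow> zadd (Mgr G) X Y \<in> IK"
  by (rule IK_memI) (simp add: zi_add IK_memD)

lemma IK_act: "X \<in> IK \<Longrightarrow> zact (Mgr G) n X \<in> IK"
  by (rule IK_memI) (simp add: zi_act IK_memD)

lemma IK_K: "m \<in> msets_over (K \<times> (UNIV :: int set)) \<Longrightarrow> cls G m \<in> IK"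
proof (induction m)
  case empty then show ?case using IK_0 by simp
next
  case (add x m)
  then have m: "m \<in> msets_over (K \<times> UNIV)" and x: "fst x \<in> K" by (auto simp: msets_over_def)
  obtain v i where xv: "x = (v, i)" by (cases x)
  have "cls G {#x#} \<in> SK" using x xv by (auto simp: gen_cls)
  then have "cls G {#x#} \<in> IK" by (intro IK_memI) blast
  moreover have "cls G m \<in> IK" using add.IH m by blast
  moreover have "cls G (add_mset x m) = zadd (Mgr G) (cls G {#x#}) (cls G m)"
  proof -
    have xV: "{#x#} \<in> VG" using x Ksub xv by (auto simp: msets_over_def)
    show ?thesis using cls_add[OF wf xV KV[OF m]] by simp
  qed
  ultimately show ?case using IK_add by simp
qed

lemma IK_kerQ: "X \<in> IK \<Longrightarrow> c \<in> X \<Longrightarrow> (phi K c, {#}) \<in> gr_cong Q"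
  using IK_ker by (simp add: kerQ_def subset_iff)

lemma qsetup_ideal: "qsetup G K IK"
  apply (rule qsetup.intro[OF qbase_axioms], rule qsetup_axioms.intro)
  using IK_sub IK_0 IK_add IK_act IK_K IK_kerQ by blast+

end

lemma emits_restr: "v \<in> H \<Longrightarrow> emits (restr_graph E H) v = emits E v"
  by (auto simp: emits_def restr_graph_def)

lemma restr_simps[simp]: "verts (restr_graph E H) = H" "rng (restr_graph E H) = rng E" "src (restr_graph E H) = src E"
  by (simp_all add: restr_graph_def)

lemma gc_mono:
  assumes "H1 \<subseteq> H2" "(a, b) \<in> gr_cong (restr_graph E H1)"
  shows "(a, b) \<in> gr_cong (restr_graph E H2)"
  using assms(2)
proof induction
  case (gr_refl a)
  then show ?case using assms(1) by (intro gr_cong.gr_refl) (auto simp: msets_over_def)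
next
  case (gr_base v i)
  then have v: "v \<in> H1" "v \<in> H2" using assms(1) by auto
  have "\<not> sink (restr_graph E H2) v" using gr_base v by (simp add: sink_def emits_restr)
  from gr_cong.gr_base[of v "restr_graph E H2", OF _ this, of i] show ?case
    using v by (simp add: emits_restr)
next
  case (gr_sym a b) then show ?case by (blast intro: gr_cong.gr_sym)
next
  case (gr_trans a b c) then show ?case by (blast intro: gr_cong.gr_trans)
next
  case (gr_add a b c d) then show ?case by (blast intro: gr_cong.gr_add)
qed

lemma qbase_restr:
  assumes wf: "wf_graph E" and rf: "row_finite E"
    and h1: "hereditary E H1" "saturated E H1" and h2: "hereditary E H2" and sub: "H1 \<subseteq> H2"
  shows "qbase (restr_graph E H2) H1"
proof
  show "wf_graph (restr_graph E H2)" using h2 by (auto simp: wf_graph_def restr_graph_def hereditary_def)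
  show "row_finite (restr_graph E H2)" using rf h2
    by (auto simp: row_finite_def emits_restr hereditary_def)
  show "H1 \<subseteq> verts (restr_graph E H2)" using sub by simp
  show "\<forall>e\<in>edges (restr_graph E H2). src (restr_graph E H2) e \<in> H1 \<longrightarrow> rng (restr_graph E H2) e \<in> H1"
    using h1 by (auto simp: restr_graph_def hereditary_def)
  show "\<forall>v\<in>verts (restr_graph E H2) - H1. \<not> sink (restr_graph E H2) v \<longrightarrow>
          (\<exists>e\<in>emits (restr_graph E H2) v. rng (restr_graph E H2) e \<notin> H1)"
  proof (intro ballI impI)
    fix v assume v: "v \<in> verts (restr_graph E H2) - H1" and ns: "\<not> sink (restr_graph E H2) v"
    then have vE: "v \<in> verts E" "v \<in> H2" using h2 by (auto simp: hereditary_def)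
    have "\<not> sink E v" using ns vE by (simp add: sink_def emits_restr)
    then show "\<exists>e\<in>emits (restr_graph E H2) v. rng (restr_graph E H2) e \<notin> H1"
      using h1(2) v vE by (auto simp: saturated_def emits_restr)
  qed
qed

lemma Qg_quot:
  assumes "hereditary E H2"
  shows "Qg (restr_graph E H2) H1 = quot_graph E H1 H2"
  by (auto simp: Qg_def restr_graph_def quot_graph_def)

lemma N_restr:
  assumes "wf_graph E" "hereditary E H2" "H1 \<subseteq> H2"
  shows "nat_map E H2 ` zcar (Mgr (restr_graph E H1)) = cls (restr_graph E H2) ` msets_over (H1 \<times> UNIV)"
proof -
  have wf2: "wf_graph (restr_graph E H2)" using assms by (auto simp: wf_graph_def restr_graph_def hereditary_def)
  have "nat_map E H2 (cls (restr_graph E H1) c) = cls (restr_graph E H2) c"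
    if c: "c \<in> msets_over (H1 \<times> UNIV)" for c
  proof -
    have c2: "c \<in> msets_over (verts (restr_graph E H2) \<times> UNIV)" using c assms(3) by (auto simp: msets_over_def)
    show ?thesis
    proof
      show "nat_map E H2 (cls (restr_graph E H1) c) \<subseteq> cls (restr_graph E H2) c"
      proof
        fix x assume "x \<in> nat_map E H2 (cls (restr_graph E H1) c)"
        then obtain y where y: "(c, y) \<in> gr_cong (restr_graph E H1)" "(y, x) \<in> gr_cong (restr_graph E H2)"
          unfolding nat_map_def cls_def by blast
        have "(c, y) \<in> gr_cong (restr_graph E H2)" using gc_mono[OF assms(3) y(1)] .
        from gr_trans[OF this y(2)] show "x \<in> cls (restr_graph E H2) c" by (simp add: cls_def)
      qed
      show "cls (restr_graph E H2) c \<subseteq> nat_map E H2 (cls (restr_graph E H1) c)"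
      proof
        fix x assume "x \<in> cls (restr_graph E H2) c"
        moreover have "c \<in> cls (restr_graph E H1) c" using c by (intro cls_self) simp
        ultimately show "x \<in> nat_map E H2 (cls (restr_graph E H1) c)"
          unfolding nat_map_def cls_def by blast
      qed
    qed
  qed
  then have "nat_map E H2 ` cls (restr_graph E H1) ` msets_over (H1 \<times> UNIV) = cls (restr_graph E H2) ` msets_over (H1 \<times> UNIV)"
    unfolding image_image by (rule image_cong[OF refl])
  then show ?thesis by (simp add: zcar_Mgr)
qed

lemma qbase_E:
  assumes wf: "wf_graph E" and rf: "row_finite E" and h: "hereditary E H" "saturated E H"
  shows "qbase E H"
proof
  show "wf_graph E" "row_finite E" by fact+
  show "H \<subseteq> verts E" "\<forall>e\<in>edges E. src E e \<in> H \<longrightarrow> rng E e \<in> H" using h by (auto simp: hereditary_def)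
  show "\<forall>v\<in>verts E - H. \<not> sink E v \<longrightarrow> (\<exists>e\<in>emits E v. rng E e \<notin> H)"
    using h(2) by (auto simp: saturated_def)
qed

lemma Qg_mod: "wf_graph E \<Longrightarrow> Qg E H = graph_mod E H"
  by (auto simp: Qg_def graph_mod_def quot_graph_def wf_graph_def)

theorem lemma3p3:
  fixes E :: "('v, 'e) graph"
  assumes wf: "wf_graph E" and rf: "row_finite E"
  shows
   "(\<forall>H1 H2. hereditary E H1 \<and> saturated E H1 \<and> hereditary E H2 \<and> saturated E H2 \<and> H1 \<subseteq> H2
      \<longrightarrow> (\<exists>f. zmon_iso (Mgr (quot_graph E H1 H2))
                       (zmon_quot (Mgr (restr_graph E H2))
                          (nat_map E H2 ` zcar (Mgr (restr_graph E H1)))) f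
              \<and> (\<forall>v\<in>H2 - H1. \<forall>i. f (gen (quot_graph E H1 H2) v i) =
                     zquot_rel (Mgr (restr_graph E H2))
                        (nat_map E H2 ` zcar (Mgr (restr_graph E H1)))
                       `` {gen (restr_graph E H2) v i}))) \<and>
    (\<forall>H. hereditary E H \<and> saturated E H
      \<longrightarrow> (\<exists>f. zmon_iso (Mgr (graph_mod E H))
                  (zmon_quot (Mgr E) (zorder_ideal_gen (Mgr E) {gen E v i | v i. v \<in> H})) f
              \<and> (\<forall>v\<in>verts E - H. \<forall>i. f (gen (graph_mod E H) v i) =
                     zquot_rel (Mgr E) (zorder_ideal_gen (Mgr E) {gen E v i | v i. v \<in> H})
                       `` {gen E v i})))"
proof (intro conjI allI impI)
  fix H1 H2 assume h: "hereditary E H1 \<and> saturated E H1 \<and> hereditary E H2 \<and> saturated E H2 \<and> H1 \<subseteq> H2"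
  then have qb: "qbase (restr_graph E H2) H1" using qbase_restr[OF wf rf] by blast
  have "qsetup (restr_graph E H2) H1 (cls (restr_graph E H2) ` msets_over (H1 \<times> UNIV))"
    using qbase.qsetup_sub[OF qb] .
  from qsetup.main[OF this]
  show "\<exists>f. zmon_iso (Mgr (quot_graph E H1 H2))
                       (zmon_quot (Mgr (restr_graph E H2))
                          (nat_map E H2 ` zcar (Mgr (restr_graph E H1)))) f
              \<and> (\<forall>v\<in>H2 - H1. \<forall>i. f (gen (quot_graph E H1 H2) v i) =
                     zquot_rel (Mgr (restr_graph E H2))
                        (nat_map E H2 ` zcar (Mgr (restr_graph E H1)))
                       `` {gen (restr_graph E H2) v i})"
    using h by (simp add: Qg_quot N_restr[OF wf])
next
  fix H assume h: "hereditary E H \<and> saturated E H"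
  then have qb: "qbase E H" using qbase_E[OF wf rf] by blast
  from qsetup.main[OF qbase.qsetup_ideal[OF qb]]
  show "\<exists>f. zmon_iso (Mgr (graph_mod E H))
                  (zmon_quot (Mgr E) (zorder_ideal_gen (Mgr E) {gen E v i | v i. v \<in> H})) f
              \<and> (\<forall>v\<in>verts E - H. \<forall>i. f (gen (graph_mod E H) v i) =
                     zquot_rel (Mgr E) (zorder_ideal_gen (Mgr E) {gen E v i | v i. v \<in> H})
                       `` {gen E v i})"
    by (simp add: Qg_mod[OF wf])
qed

end
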